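(* For no $a_0,a_3\in\mathbb{C}$ is the third-order recursion $$z_n = \frac{a_3 z_{n-3} + z_{n-1} + a_0}{z_{n-3}}$$ periodic with period $8$, and for no $a_0,a_3\in\mathbb{C}$ is it periodic with period $12$.
   Context: Let $z_1,z_2,z_3$ be independent indeterminates over $\mathbb{C}$ and define $z_n\in\mathbb{C}(z_1,z_2,z_3)$ for $n\ge4$ by the recursion. A third-order recursion is periodic with period $k$ if all iterates are well-defined elements of $\mathbb{C}(z_1,z_2,z_3)$ (no denominator identically zero) and $z_{k+1}=z_1$, $z_{k+2}=z_2$, $z_{k+3}=z_3$. *)

theory Defs
  imports Complex_Main "HOL-Computational_Algebra.Polynomial" "HOL-Computational_Algebra.Fraction_Field"
begin

text \<open>The polynomial ring C[z1,z2,z3] is modelled as nested univariate polynomials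
  (complex poly poly poly); its fraction field is C(z1,z2,z3).\<close>

type_synonym rf3 = "complex poly poly poly fract"

definition zvar1 :: rf3 where "zvar1 = Fract [:[:[:0, 1:]:]:] 1"
definition zvar2 :: rf3 where "zvar2 = Fract [:[:0, 1:]:] 1"
definition zvar3 :: rf3 where "zvar3 = Fract [:0, 1:] 1"
definition rconst :: "complex \<Rightarrow> rf3" where "rconst c = Fract [:[:[:c:]:]:] 1"

text \<open>Iterates of z_n = (a3 z_{n-3} + z_{n-1} + a0) / z_{n-3}; index 0 is a dummy.\<close>
fun zseq :: "complex \<Rightarrow> complex \<Rightarrow> nat \<Rightarrow> rf3" where
  "zseq a0 a3 0 = zvar1"
| "zseq a0 a3 (Suc 0) = zvar1"
| "zseq a0 a3 (Suc (Suc 0)) = zvar2"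
| "zseq a0 a3 (Suc (Suc (Suc 0))) = zvar3"
| "zseq a0 a3 (Suc (Suc (Suc (Suc n)))) =
     (rconst a3 * zseq a0 a3 (Suc n) + zseq a0 a3 (Suc (Suc (Suc n))) + rconst a0)
       / zseq a0 a3 (Suc n)"

definition periodic_rec :: "complex \<Rightarrow> complex \<Rightarrow> nat \<Rightarrow> bool" where
  "periodic_rec a0 a3 k \<longleftrightarrow>
     (\<forall>n\<ge>4. zseq a0 a3 (n - 3) \<noteq> 0) \<and>
     zseq a0 a3 (k + 1) = zseq a0 a3 1 \<and>
     zseq a0 a3 (k + 2) = zseq a0 a3 2 \<and>
     zseq a0 a3 (k + 3) = zseq a0 a3 3"

end

theory Submission
  imports Defs "HOL-Computational_Algebra.Formal_Power_Series"
    "HOL-Computational_Algebra.Fundamental_Theorem_Algebra"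
begin
unbundle fps_syntax


definition rh :: "('a::comm_ring_1 \<Rightarrow> 'b::comm_ring_1) \<Rightarrow> bool" where
  "rh h \<longleftrightarrow> h 0 = 0 \<and> h 1 = 1 \<and> (\<forall>a b. h (a + b) = h a + h b) \<and> (\<forall>a b. h (a * b) = h a * h b)"

definition hev :: "('a::comm_ring_1 \<Rightarrow> 'b::comm_ring_1) \<Rightarrow> 'b \<Rightarrow> 'a poly \<Rightarrow> 'b" where
  "hev h x p = poly (map_poly h p) x"

lemma hev_pCons: "rh h \<Longrightarrow> hev h x (pCons a p) = h a + x * hev h x p"
  unfolding hev_def rh_def by (simp add: map_poly_pCons)

lemma hev_add: assumes "rh h" shows "hev h x (p + q) = hev h x p + hev h x q"
proof -
  have "map_poly h (p + q) = map_poly h p + map_poly h q"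
    using assms unfolding rh_def by (intro poly_eqI) (simp add: coeff_map_poly)
  then show ?thesis unfolding hev_def by simp
qed

lemma hev_smult: assumes "rh h" shows "hev h x (smult a p) = h a * hev h x p"
proof -
  have "map_poly h (smult a p) = smult (h a) (map_poly h p)"
    using assms unfolding rh_def by (intro map_poly_smult) auto
  then show ?thesis unfolding hev_def by simp
qed

lemma hev_mult: assumes "rh h" shows "hev h x (p * q) = hev h x p * hev h x q"
proof (induction p)
  case 0
  then show ?case using assms by (simp add: hev_def)
next
  case (pCons a p)
  have h0: "h 0 = 0" using assms by (simp add: rh_def)
  have "hev h x (pCons a p * q) = hev h x (smult a q + pCons 0 (p * q))" by simp
  also have "\<dots> = h a * hev h x q + x * (hev h x p * hev h x q)"
    using assms pCons by (simp add: hev_add hev_smult hev_pCons h0)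
  also have "\<dots> = hev h x (pCons a p) * hev h x q"
    using assms by (simp add: hev_pCons algebra_simps)
  finally show ?case .
qed

lemma rh_hev: assumes "rh h" shows "rh (hev h x)"
proof -
  have "hev h x 0 = 0" by (simp add: hev_def)
  moreover have "hev h x 1 = 1" using assms by (simp add: hev_def rh_def)
  ultimately show ?thesis using assms by (simp add: rh_def hev_add hev_mult)
qed

lemma rh_fps_const: "rh (fps_const :: complex \<Rightarrow> complex fps)"
  by (simp add: rh_def)

definition E :: "complex fps \<Rightarrow> complex fps \<Rightarrow> complex fps \<Rightarrow> complex poly poly poly \<Rightarrow> complex fps" where
  "E x1 x2 x3 = hev (hev (hev fps_const x1) x2) x3"

lemma rh_E: "rh (E x1 x2 x3)"
  unfolding E_def by (intro rh_hev rh_fps_const)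

lemma hev_zero [simp]: "hev h x 0 = 0" by (simp add: hev_def)

lemma rh_E1: "rh (hev (fps_const :: complex \<Rightarrow> complex fps) x1)" by (intro rh_hev rh_fps_const)
lemma rh_E2: "rh (hev (hev (fps_const :: complex \<Rightarrow> complex fps) x1) x2)" by (intro rh_hev rh_fps_const)

lemma E_0: "E x1 x2 x3 0 = 0" using rh_E by (simp add: rh_def)
lemma E_1: "E x1 x2 x3 1 = 1" using rh_E by (simp add: rh_def)
lemma E_add: "E x1 x2 x3 (p + q) = E x1 x2 x3 p + E x1 x2 x3 q" using rh_E by (simp add: rh_def)
lemma E_mult: "E x1 x2 x3 (p * q) = E x1 x2 x3 p * E x1 x2 x3 q" using rh_E by (simp add: rh_def)

lemma E_const: "E x1 x2 x3 [:[:[:c:]:]:] = fps_const c"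
  unfolding E_def using rh_E1[of x1] rh_E2[of x1 x2]
  by (simp add: hev_pCons rh_def)

lemma E_v1: "E x1 x2 x3 [:[:[:0, 1:]:]:] = x1"
  unfolding E_def using rh_E1[of x1] rh_E2[of x1 x2]
  by (simp add: hev_pCons rh_def)

lemma E_v2: "E x1 x2 x3 [:[:0, 1:]:] = x2"
  unfolding E_def using rh_E1[of x1] rh_E2[of x1 x2]
  by (simp add: hev_pCons rh_def)

lemma E_v3: "E x1 x2 x3 [:0, 1:] = x3"
  unfolding E_def using rh_E1[of x1] rh_E2[of x1 x2]
  by (simp add: hev_pCons rh_def)



context
  fixes x1 x2 x3 :: "complex fps"
begin
unbundle fps_syntax

definition good :: "rf3 \<Rightarrow> bool" where
  "good z \<longleftrightarrow> (\<exists>a b. z = Fract a b \<and> E x1 x2 x3 b $ 0 \<noteq> 0)"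

definition val :: "rf3 \<Rightarrow> complex fps" where
  "val z = (SOME v. \<exists>a b. z = Fract a b \<and> E x1 x2 x3 b $ 0 \<noteq> 0 \<and> v = E x1 x2 x3 a * inverse (E x1 x2 x3 b))"

lemma E_nz: "E x1 x2 x3 b $ 0 \<noteq> 0 \<Longrightarrow> b \<noteq> 0"
  by (auto simp: E_0)

lemma val_eq:
  assumes "E x1 x2 x3 b $ 0 \<noteq> 0"
  shows "val (Fract a b) = E x1 x2 x3 a * inverse (E x1 x2 x3 b)"
proof -
  let ?E = "E x1 x2 x3"
  have uniq: "v = ?E a * inverse (?E b)"
    if "Fract a b = Fract a' b'" "?E b' $ 0 \<noteq> 0" "v = ?E a' * inverse (?E b')" for v a' b'
  proof -
    have "b \<noteq> 0" "b' \<noteq> 0" using assms that(2) E_nz by auto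
    then have "a * b' = a' * b" using that(1) by (simp add: eq_fract)
    then have eq: "?E a * ?E b' = ?E a' * ?E b" by (metis E_mult)
    have i1: "?E b * inverse (?E b) = 1" using assms by (rule inverse_mult_eq_1')
    have i2: "?E b' * inverse (?E b') = 1" using that(2) by (rule inverse_mult_eq_1')
    have "?E a' * inverse (?E b') = ?E a' * inverse (?E b') * (?E b * inverse (?E b))"
      using i1 by simp
    also have "\<dots> = (?E a' * ?E b) * inverse (?E b) * inverse (?E b')" by (simp add: ac_simps)
    also have "\<dots> = (?E a * ?E b') * inverse (?E b) * inverse (?E b')" using eq by simp
    also have "\<dots> = ?E a * inverse (?E b) * (?E b' * inverse (?E b'))" by (simp add: ac_simps)
    also have "\<dots> = ?E a * inverse (?E b)" using i2 by simp
    finally show ?thesis using that(3) by simp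
  qed
  have ex: "\<exists>v. \<exists>a' b'. Fract a b = Fract a' b' \<and> ?E b' $ 0 \<noteq> 0 \<and> v = ?E a' * inverse (?E b')"
    using assms by blast
  from someI_ex[OF ex] uniq show ?thesis unfolding val_def by blast
qed

lemma good_add:
  assumes "good z" "good y"
  shows "good (z + y) \<and> val (z + y) = val z + val y"
proof -
  let ?E = "E x1 x2 x3"
  obtain a b where z: "z = Fract a b" "?E b $ 0 \<noteq> 0" using assms(1) good_def by auto
  obtain c d where y: "y = Fract c d" "?E d $ 0 \<noteq> 0" using assms(2) good_def by auto
  have bd: "b \<noteq> 0" "d \<noteq> 0" using z y E_nz by auto
  have s: "z + y = Fract (a * d + c * b) (b * d)" using z y bd by simp
  have n: "?E (b * d) $ 0 \<noteq> 0" using z y by (simp add: E_mult)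
  have "val (z + y) = ?E (a * d + c * b) * inverse (?E (b * d))" using s n val_eq by simp
  also have "\<dots> = (?E a * ?E d + ?E c * ?E b) * (inverse (?E b) * inverse (?E d))"
    by (simp add: E_mult E_add fps_inverse_mult)
  also have "\<dots> = ?E a * inverse (?E b) * (?E d * inverse (?E d)) + ?E c * inverse (?E d) * (?E b * inverse (?E b))"
    by (simp add: algebra_simps)
  also have "\<dots> = val z + val y"
    using z y val_eq inverse_mult_eq_1'[OF z(2)] inverse_mult_eq_1'[OF y(2)] by simp
  finally show ?thesis using s n good_def by blast
qed

lemma good_mult:
  assumes "good z" "good y"
  shows "good (z * y) \<and> val (z * y) = val z * val y"
proof -
  let ?E = "E x1 x2 x3"
  obtain a b where z: "z = Fract a b" "?E b $ 0 \<noteq> 0" using assms(1) good_def by auto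
  obtain c d where y: "y = Fract c d" "?E d $ 0 \<noteq> 0" using assms(2) good_def by auto
  have s: "z * y = Fract (a * c) (b * d)" using z y by simp
  have n: "?E (b * d) $ 0 \<noteq> 0" using z y by (simp add: E_mult)
  have "val (z * y) = ?E (a * c) * inverse (?E (b * d))" using s n val_eq by simp
  also have "\<dots> = (?E a * inverse (?E b)) * (?E c * inverse (?E d))"
    by (simp add: E_mult fps_inverse_mult ac_simps)
  also have "\<dots> = val z * val y"
    using z y val_eq by simp
  finally show ?thesis using s n good_def by blast
qed

lemma good_div:
  assumes "good z" "good y" "val y $ 0 \<noteq> 0"
  shows "good (z / y) \<and> val (z / y) = val z * inverse (val y)"
proof -
  let ?E = "E x1 x2 x3"
  obtain a b where z: "z = Fract a b" "?E b $ 0 \<noteq> 0" using assms(1) good_def by auto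
  obtain c d where y: "y = Fract c d" "?E d $ 0 \<noteq> 0" using assms(2) good_def by auto
  have vy: "val y = ?E c * inverse (?E d)" using y val_eq by simp
  have c0: "?E c $ 0 \<noteq> 0" using assms(3) vy by simp
  have s: "z / y = Fract (a * d) (b * c)" using z y by simp
  have n: "?E (b * c) $ 0 \<noteq> 0" using z c0 by (simp add: E_mult)
  have "val (z / y) = ?E (a * d) * inverse (?E (b * c))" using s n val_eq by simp
  also have "\<dots> = (?E a * inverse (?E b)) * inverse (?E c * inverse (?E d))"
    using y(2) by (simp add: E_mult fps_inverse_mult ac_simps)
  also have "\<dots> = val z * inverse (val y)"
    using z vy val_eq by simp
  finally show ?thesis using s n good_def by blast
qed

lemma good_Fract1:
  "good (Fract p 1) \<and> val (Fract p 1) = E x1 x2 x3 p"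
proof -
  have "E x1 x2 x3 1 $ 0 \<noteq> 0" by (simp add: E_1)
  then show ?thesis using val_eq[of 1 p] unfolding good_def by (metis E_1 fps_inverse_one mult.right_neutral)
qed

lemma good_rconst: "good (rconst c) \<and> val (rconst c) = fps_const c"
  using good_Fract1[of "[:[:[:c:]:]:]"] by (simp add: rconst_def E_const)

lemma good_zvar1: "good zvar1 \<and> val zvar1 = x1"
  using good_Fract1[of "[:[:[:0, 1:]:]:]"] by (simp add: zvar1_def E_v1)
lemma good_zvar2: "good zvar2 \<and> val zvar2 = x2"
  using good_Fract1[of "[:[:0, 1:]:]"] by (simp add: zvar2_def E_v2)
lemma good_zvar3: "good zvar3 \<and> val zvar3 = x3"
  using good_Fract1[of "[:0, 1:]"] by (simp add: zvar3_def E_v3)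

end



fun Fs :: "complex \<Rightarrow> complex \<Rightarrow> complex fps \<Rightarrow> complex fps \<Rightarrow> complex fps \<Rightarrow> nat \<Rightarrow> complex fps" where
  "Fs a0 a3 x1 x2 x3 0 = x1"
| "Fs a0 a3 x1 x2 x3 (Suc 0) = x1"
| "Fs a0 a3 x1 x2 x3 (Suc (Suc 0)) = x2"
| "Fs a0 a3 x1 x2 x3 (Suc (Suc (Suc 0))) = x3"
| "Fs a0 a3 x1 x2 x3 (Suc (Suc (Suc (Suc n)))) =
     (fps_const a3 * Fs a0 a3 x1 x2 x3 (Suc n) + Fs a0 a3 x1 x2 x3 (Suc (Suc (Suc n))) + fps_const a0)
       * inverse (Fs a0 a3 x1 x2 x3 (Suc n))"

lemma main_eval:
  "1 \<le> n \<Longrightarrow> (\<forall>m. 1 \<le> m \<longrightarrow> m + 3 \<le> n \<longrightarrow> Fs a0 a3 x1 x2 x3 m $ 0 \<noteq> 0) \<Longrightarrow>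
   good x1 x2 x3 (zseq a0 a3 n) \<and> val x1 x2 x3 (zseq a0 a3 n) = Fs a0 a3 x1 x2 x3 n"
proof (induction n rule: less_induct)
  case (less n)
  show ?case
  proof (cases n)
    case 0 then show ?thesis using less by simp
  next
    case (Suc n1)
    note n1 = Suc
    show ?thesis
    proof (cases n1)
      case 0 then show ?thesis using n1 good_zvar1 by simp
    next
      case (Suc n2)
      note n2 = Suc
      show ?thesis
      proof (cases n2)
        case 0 then show ?thesis using n1 n2 good_zvar2 by simp
      next
        case (Suc n3)
        note n3 = Suc
        show ?thesis
        proof (cases n3)
          case 0 then show ?thesis using n1 n2 n3 good_zvar3 by simp
        next
          case (Suc k)
          have nk: "n = Suc (Suc (Suc (Suc k)))" using n1 n2 n3 Suc by simp
          have IH1: "good x1 x2 x3 (zseq a0 a3 (Suc k)) \<and> val x1 x2 x3 (zseq a0 a3 (Suc k)) = Fs a0 a3 x1 x2 x3 (Suc k)"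
            using less.IH[of "Suc k"] less.prems nk by auto
          have IH3: "good x1 x2 x3 (zseq a0 a3 (Suc (Suc (Suc k)))) \<and> val x1 x2 x3 (zseq a0 a3 (Suc (Suc (Suc k)))) = Fs a0 a3 x1 x2 x3 (Suc (Suc (Suc k)))"
            using less.IH[of "Suc (Suc (Suc k))"] less.prems nk by auto
          have nz: "Fs a0 a3 x1 x2 x3 (Suc k) $ 0 \<noteq> 0" using less.prems nk by auto
          let ?A = "zseq a0 a3 (Suc k)" and ?B = "zseq a0 a3 (Suc (Suc (Suc k)))"
          have g1: "good x1 x2 x3 (rconst a3 * ?A) \<and> val x1 x2 x3 (rconst a3 * ?A) = fps_const a3 * Fs a0 a3 x1 x2 x3 (Suc k)"
            using good_mult[OF conjunct1[OF good_rconst] conjunct1[OF IH1]] good_rconst IH1 by simp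
          have g2: "good x1 x2 x3 (rconst a3 * ?A + ?B) \<and> val x1 x2 x3 (rconst a3 * ?A + ?B) = fps_const a3 * Fs a0 a3 x1 x2 x3 (Suc k) + Fs a0 a3 x1 x2 x3 (Suc (Suc (Suc k)))"
            using good_add[OF conjunct1[OF g1] conjunct1[OF IH3]] g1 IH3 by simp
          have g3: "good x1 x2 x3 (rconst a3 * ?A + ?B + rconst a0) \<and> val x1 x2 x3 (rconst a3 * ?A + ?B + rconst a0) = fps_const a3 * Fs a0 a3 x1 x2 x3 (Suc k) + Fs a0 a3 x1 x2 x3 (Suc (Suc (Suc k))) + fps_const a0"
            using good_add[OF conjunct1[OF g2] conjunct1[OF good_rconst]] g2 good_rconst by simp
          have g4: "good x1 x2 x3 ((rconst a3 * ?A + ?B + rconst a0) / ?A) \<and> val x1 x2 x3 ((rconst a3 * ?A + ?B + rconst a0) / ?A) = (fps_const a3 * Fs a0 a3 x1 x2 x3 (Suc k) + Fs a0 a3 x1 x2 x3 (Suc (Suc (Suc k))) + fps_const a0) * inverse (Fs a0 a3 x1 x2 x3 (Suc k))"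
            using good_div[OF conjunct1[OF g3] conjunct1[OF IH1]] g3 IH1 nz by simp
          show ?thesis using g4 nk by simp
        qed
      qed
    qed
  qed
qed



lemma periodic_Fs:
  assumes "periodic_rec a0 a3 P" "\<forall>m. 1 \<le> m \<longrightarrow> m + 3 \<le> P + 1 \<longrightarrow> Fs a0 a3 x1 x2 x3 m $ 0 \<noteq> 0"
  shows "Fs a0 a3 x1 x2 x3 (P + 1) = x1"
proof -
  have "zseq a0 a3 (P + 1) = zseq a0 a3 1" using assms(1) unfolding periodic_rec_def by blast
  moreover have "val x1 x2 x3 (zseq a0 a3 (P + 1)) = Fs a0 a3 x1 x2 x3 (P + 1)"
    using main_eval[of "P + 1" a0 a3 x1 x2 x3] assms(2) by auto
  moreover have "val x1 x2 x3 (zseq a0 a3 1) = x1"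
    using main_eval[of 1 a0 a3 x1 x2 x3] by simp
  ultimately show ?thesis by simp
qed

lemma inv1:
  fixes A :: "complex fps"
  assumes "A $ 0 = w" "w \<noteq> 0"
  shows "inverse A $ 0 = 1 / w" "inverse A $ 1 = - (A $ 1) / (w * w)"
proof -
  show "inverse A $ 0 = 1 / w" using assms by (simp add: field_simps)
  have "A * inverse A = 1" using assms by (intro inverse_mult_eq_1') simp
  then have "(A * inverse A) $ 1 = 0" by simp
  then have "w * (inverse A $ 1) + A $ 1 * (1 / w) = 0"
    using assms by (simp add: fps_mult_nth_1 field_simps)
  then have "w * (inverse A $ 1) = - (A $ 1 / w)" by (simp add: eq_neg_iff_add_eq_0)
  then have "inverse A $ 1 = - (A $ 1 / w) / w" using assms(2) by (metis nonzero_mult_div_cancel_left)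
  then show "inverse A $ 1 = - (A $ 1) / (w * w)" by simp
qed

lemma fixed_orbit:
  fixes w l :: complex
  assumes w0: "w \<noteq> 0" and fx: "w * w = (a3 + 1) * w + a0"
    and root: "l ^ 3 = l ^ 2 / w + (a3 / w - 1)"
  defines "X i \<equiv> fps_const w + fps_const (l ^ i) * fps_X"
  shows "1 \<le> n \<Longrightarrow> Fs a0 a3 (X 0) (X 1) (X 2) n $ 0 = w \<and> Fs a0 a3 (X 0) (X 1) (X 2) n $ 1 = l ^ (n - 1)"
proof (induction n rule: less_induct)
  case (less n)
  let ?F = "Fs a0 a3 (X 0) (X 1) (X 2)"
  have X0: "X i $ 0 = w" "X i $ 1 = l ^ i" for i by (simp_all add: X_def)
  show ?case
  proof (cases "n \<le> 3")
    case True
    then have "n = 1 \<or> n = 2 \<or> n = 3" using less.prems by auto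
    then show ?thesis using X0 by (auto simp: numeral_eq_Suc)
  next
    case False
    define k where "k = n - 4"
    have nk: "n = Suc (Suc (Suc (Suc k)))" using False unfolding k_def by simp
    have IH1: "?F (Suc k) $ 0 = w" "?F (Suc k) $ 1 = l ^ k" using less.IH[of "Suc k"] nk by auto
    have IH3: "?F (Suc (Suc (Suc k))) $ 0 = w" "?F (Suc (Suc (Suc k))) $ 1 = l ^ (k + 2)" using less.IH[of "Suc (Suc (Suc k))"] nk by auto
    have i: "inverse (?F (Suc k)) $ 0 = 1 / w" "inverse (?F (Suc k)) $ 1 = - (l ^ k) / (w * w)"
      using inv1[OF IH1(1) w0] IH1 by auto
    let ?N = "fps_const a3 * ?F (Suc k) + ?F (Suc (Suc (Suc k))) + fps_const a0"
    have N0: "?N $ 0 = w * w" using IH1 IH3 fx by (simp add: algebra_simps)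
    have N1: "?N $ 1 = a3 * l ^ k + l ^ (k + 2)" using IH1 IH3 by (simp add: fps_mult_nth_1)
    have r0: "?F n $ 0 = w" using nk N0 i w0 by (simp add: field_simps)
    have "?F n $ 1 = (w * w) * (- (l ^ k) / (w * w)) + (a3 * l ^ k + l ^ (k + 2)) * (1 / w)"
      using nk N0 N1 i by (simp add: fps_mult_nth_1)
    also have "\<dots> = - (l ^ k) + (a3 * l ^ k + l ^ k * l ^ 2) / w" using w0 by (simp add: power_add power2_eq_square)
    also have "\<dots> = l ^ k * (l ^ 2 / w + (a3 / w - 1))" using w0 by (simp add: algebra_simps add_divide_distrib)
    also have "\<dots> = l ^ k * l ^ 3" using root by simp
    also have "\<dots> = l ^ (k + 3)" by (simp only: power_add)
    also have "\<dots> = l ^ (n - 1)" using nk by (simp add: numeral_3_eq_3)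
    finally show ?thesis using r0 by simp
  qed
qed

lemma caseA:
  fixes w l :: complex
  assumes w0: "w \<noteq> 0" and fx: "w * w = (a3 + 1) * w + a0"
    and root: "l ^ 3 = l ^ 2 / w + (a3 / w - 1)"
    and per: "periodic_rec a0 a3 P"
  shows "l ^ P = 1"
proof -
  define X where "X i = fps_const w + fps_const (l ^ i) * fps_X" for i :: nat
  let ?F = "Fs a0 a3 (X 0) (X 1) (X 2)"
  have orb: "1 \<le> n \<Longrightarrow> ?F n $ 0 = w \<and> ?F n $ 1 = l ^ (n - 1)" for n
    using fixed_orbit[OF w0 fx root] unfolding X_def by blast
  have "?F (P + 1) = X 0"
    by (rule periodic_Fs[OF per]) (use orb w0 in auto)
  then have "?F (P + 1) $ 1 = X 0 $ 1" by simp
  then show ?thesis using orb[of "P + 1"] by (simp add: X_def)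
qed



lemma unit_cnj:
  fixes l :: complex
  assumes "l ^ P = 1" "P \<ge> 1"
  shows "l \<noteq> 0 \<and> cnj l = 1 / l"
proof -
  have "cmod l ^ P = 1 ^ P" using assms(1) by (metis norm_one norm_power power_one)
  then have n1: "cmod l = 1" using assms(2) by (subst (asm) power_eq_iff_eq_base) auto
  then have l0: "l \<noteq> 0" by auto
  have "l * cnj l = 1" using complex_norm_square[of l] n1 by simp
  then have "cnj l = 1 / l" using l0 by (simp add: field_simps mult.commute)
  then show ?thesis using l0 by simp
qed

lemma no_period_roots:
  fixes w \<beta> :: complex
  assumes w0: "w \<noteq> 0" and P: "P \<ge> 1" and H: "\<forall>l. l ^ 3 = l ^ 2 / w + \<beta> \<longrightarrow> l ^ P = 1"
  shows False
proof -
  define \<alpha> where "\<alpha> = 1 / w"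
  have a0: "\<alpha> \<noteq> 0" using w0 by (simp add: \<alpha>_def)
  have H': "l ^ P = 1" if "l ^ 3 - \<alpha> * l ^ 2 - \<beta> = 0" for l
    using H that by (simp add: \<alpha>_def algebra_simps)
  define p where "p = [:-\<beta>, 0, -\<alpha>, 1:]"
  have pe: "poly p z = z ^ 3 - \<alpha> * z ^ 2 - \<beta>" for z
    by (simp add: p_def algebra_simps power2_eq_square power3_eq_cube)
  have "degree p = 3" by (simp add: p_def)
  then have "\<not> constant (poly p)" by (subst constant_degree) simp
  then obtain l1 where r1: "poly p l1 = 0" using fundamental_theorem_of_algebra by blast
  have r1': "l1 ^ 3 - \<alpha> * l1 ^ 2 - \<beta> = 0" using r1 pe by simp
  define p1 where "p1 = l1 - \<alpha>"
  define q1 where "q1 = l1 * (l1 - \<alpha>)"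
  define s where "s = csqrt (p1 ^ 2 - 4 * q1)"
  have s2: "s ^ 2 = p1 ^ 2 - 4 * q1" by (simp add: s_def)
  define l2 where "l2 = (- p1 + s) / 2"
  define l3 where "l3 = (- p1 - s) / 2"
  have fact: "l ^ 3 - \<alpha> * l ^ 2 - \<beta> = (l - l1) * (l ^ 2 + p1 * l + q1)" for l
  proof -
    have "\<beta> = l1 ^ 3 - \<alpha> * l1 ^ 2" using r1' by simp
    then show ?thesis by (simp add: p1_def q1_def algebra_simps power2_eq_square power3_eq_cube)
  qed
  have q2: "l2 ^ 2 + p1 * l2 + q1 = 0"
  proof -
    have "l2 ^ 2 + p1 * l2 + q1 = (s ^ 2 - (p1 ^ 2 - 4 * q1)) / 4"
      unfolding l2_def by (simp add: field_simps power2_eq_square)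
    then show ?thesis using s2 by simp
  qed
  have q3: "l3 ^ 2 + p1 * l3 + q1 = 0"
  proof -
    have "l3 ^ 2 + p1 * l3 + q1 = (s ^ 2 - (p1 ^ 2 - 4 * q1)) / 4"
      unfolding l3_def by (simp add: field_simps power2_eq_square)
    then show ?thesis using s2 by simp
  qed
  have u1: "l1 \<noteq> 0 \<and> cnj l1 = 1 / l1" using unit_cnj[OF H'[OF r1'] P] .
  have u2: "l2 \<noteq> 0 \<and> cnj l2 = 1 / l2" using unit_cnj[OF H'[of l2] P] fact[of l2] q2 by simp
  have u3: "l3 \<noteq> 0 \<and> cnj l3 = 1 / l3" using unit_cnj[OF H'[of l3] P] fact[of l3] q3 by simp
  have e1: "l1 + l2 + l3 = \<alpha>" by (simp add: l2_def l3_def p1_def field_simps)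
  have e2: "l1 * l2 + l1 * l3 + l2 * l3 = 0"
  proof -
    have "l2 * l3 = (p1 ^ 2 - s ^ 2) / 4" by (simp add: l2_def l3_def field_simps power2_eq_square)
    also have "\<dots> = q1" using s2 by simp
    finally have "l2 * l3 = q1" .
    moreover have "l2 + l3 = - p1" by (simp add: l2_def l3_def field_simps)
    moreover have "l1 * l2 + l1 * l3 + l2 * l3 = l1 * (l2 + l3) + l2 * l3" by (simp add: algebra_simps)
    ultimately have "l1 * l2 + l1 * l3 + l2 * l3 = l1 * (- p1) + q1" by simp
    then show ?thesis by (simp add: p1_def q1_def algebra_simps)
  qed
  have "cnj (l1 * l2 + l1 * l3 + l2 * l3) = 0" using e2 by simp
  then have "1 / (l1 * l2) + 1 / (l1 * l3) + 1 / (l2 * l3) = 0" using u1 u2 u3 by simp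
  then have "(l1 + l2 + l3) / (l1 * l2 * l3) = 0" using u1 u2 u3 by (simp add: field_simps)
  then have "l1 + l2 + l3 = 0" using u1 u2 u3 by simp
  then show False using e1 a0 by simp
qed



lemma general_case:
  assumes per: "periodic_rec a0 a3 P" and P: "P \<ge> 1" and nd: "\<not> (a0 = 0 \<and> a3 = -1)"
  shows False
proof -
  obtain w :: complex where w0: "w \<noteq> 0" and fx: "w * w = (a3 + 1) * w + a0"
  proof (cases "a0 = 0")
    case True
    then have "a3 + 1 \<noteq> 0" using nd eq_neg_iff_add_eq_0[of a3 1] by auto
    then show ?thesis using that[of "a3 + 1"] True by simp
  next
    case False
    define t where "t = a3 + 1"
    define s where "s = csqrt (t ^ 2 + 4 * a0)"
    have s2: "s ^ 2 = t ^ 2 + 4 * a0" by (simp add: s_def)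
    define w where "w = (t + s) / 2"
    have "w * w = (t ^ 2 + 2 * t * s + s ^ 2) / 4" by (simp add: w_def field_simps power2_eq_square)
    also have "\<dots> = t * w + a0" using s2 by (simp add: w_def field_simps power2_eq_square)
    finally have e: "w * w = t * w + a0" .
    have "w \<noteq> 0" using e False by auto
    then show ?thesis using that[of w] e by (simp add: t_def)
  qed
  have "\<forall>l. l ^ 3 = l ^ 2 / w + (a3 / w - 1) \<longrightarrow> l ^ P = 1"
    using caseA[OF w0 fx _ per] by blast
  then show False using no_period_roots[OF w0 P] by blast
qed

definition G :: "nat \<Rightarrow> complex" where
  "G n = Fs 0 (-1) (fps_const 2) (fps_const 3) (fps_const 5) n $ 0"

lemma G_step: "n \<ge> 4 \<Longrightarrow> G n = (- G (n - 3) + G (n - 1)) / G (n - 3)"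
proof -
  assume "n \<ge> 4"
  define k where "k = n - 4"
  have nk: "n = Suc (Suc (Suc (Suc k)))" using \<open>n \<ge> 4\<close> unfolding k_def by simp
  show ?thesis unfolding G_def nk by (simp add: field_simps)
qed

lemma G_vals:
  "G 1 = 2" "G 2 = 3" "G 3 = 5" "G 4 = 3/2" "G 5 = -1/2" "G 6 = -11/10" "G 7 = -26/15"
  "G 8 = 37/15" "G 9 = -107/33" "G 10 = 249/286" "G 11 = -6847/10582" "G 12 = -82393/102934"
  "G 13 = -1892114/985791"
proof -
  show g1: "G 1 = 2" and g2: "G 2 = 3" and g3: "G 3 = 5" by (simp_all add: G_def numeral_eq_Suc)
  show g4: "G 4 = 3/2" using G_step[of 4] g1 g3 by simp
  show g5: "G 5 = -1/2" using G_step[of 5] g2 g4 by simp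
  show g6: "G 6 = -11/10" using G_step[of 6] g3 g5 by simp
  show g7: "G 7 = -26/15" using G_step[of 7] g4 g6 by simp
  show g8: "G 8 = 37/15" using G_step[of 8] g5 g7 by simp
  show g9: "G 9 = -107/33" using G_step[of 9] g6 g8 by simp
  show g10: "G 10 = 249/286" using G_step[of 10] g7 g9 by simp
  show g11: "G 11 = -6847/10582" using G_step[of 11] g8 g10 by simp
  show g12: "G 12 = -82393/102934" using G_step[of 12] g9 g11 by simp
  show g13: "G 13 = -1892114/985791" using G_step[of 13] g10 g12 by simp
qed

lemma caseB:
  assumes per: "periodic_rec 0 (-1) P" and P: "P = 8 \<or> P = 12"
  shows False
proof -
  have nz: "\<forall>m. 1 \<le> m \<longrightarrow> m + 3 \<le> P + 1 \<longrightarrow> Fs 0 (-1) (fps_const 2) (fps_const 3) (fps_const 5) m $ 0 \<noteq> 0"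
  proof (intro allI impI)
    fix m :: nat assume m: "1 \<le> m" "m + 3 \<le> P + 1"
    then have "m \<le> 10" using P by auto
    then have "m = 1 \<or> m = 2 \<or> m = 3 \<or> m = 4 \<or> m = 5 \<or> m = 6 \<or> m = 7 \<or> m = 8 \<or> m = 9 \<or> m = 10"
      using m(1) by presburger
    then have "G m \<noteq> 0" using G_vals by auto
    then show "Fs 0 (-1) (fps_const 2) (fps_const 3) (fps_const 5) m $ 0 \<noteq> 0" by (simp add: G_def)
  qed
  have "Fs 0 (-1) (fps_const 2) (fps_const 3) (fps_const 5) (P + 1) = fps_const 2"
    by (rule periodic_Fs[OF per nz])
  then have "G (P + 1) = 2" by (simp add: G_def)
  then show False using P G_vals(9) G_vals(13) by (auto simp: field_simps)
qed

theorem mainTheorem7: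
  shows "(\<forall>a0 a3 :: complex. \<not> periodic_rec a0 a3 8) \<and>
         (\<forall>a0 a3 :: complex. \<not> periodic_rec a0 a3 12)"
proof -
  have "\<not> periodic_rec a0 a3 P" if P: "P = 8 \<or> P = 12" for a0 a3 :: complex and P :: nat
  proof
    assume per: "periodic_rec a0 a3 P"
    show False
    proof (cases "a0 = 0 \<and> a3 = -1")
      case True
      then show False using caseB[of P] per P by simp
    next
      case False
      show False by (rule general_case[OF per _ False]) (use P in auto)
    qed
  qed
  then show ?thesis by blast
qed


end
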